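(* Let $X$ be a set, $U\subset 2^X$ a non-empty family closed under $\Delta$ and $\cap$, and $\mu:U\to B_2$ a function. (a) If $\mu$ is a measure, then for every ascending sequence $A_0\subset A_1\subset A_2\subset\cdots$ of sets in $U$ such that $A=\bigcup_n A_n\in U$, the binary sequence $(\mu(A_n))_n$ is convergent and $\mu(A)=\lim_{n\to\infty}\mu(A_n)$. (b) Suppose $\mu$ is additive and has the property: for every ascending sequence $(A_n)$ of sets in $U$ whose union $A$ belongs to $U$, the binary sequence $(\mu(A_n))_n$ is convergent and $\mu(A)=\lim_{n\to\infty}\mu(A_n)$. Then $\mu$ is a measure.
   Context: $B_2=\{0,1\}$ with $\oplus$ addition modulo 2. $\mu$ is additive if $\mu(A\Delta B)=\mu(A)\oplus\mu(B)$ for all $A,B\in U$ (equivalently $\mu(A\cup B)=\mu(A)\oplus\mu(B)$ whenever $A\cap B=\emptyset$). $\mu$ is a measure (countably additive) if for every sequence $(A_n)$ of pairwise disjoint sets of $U$ with $\bigcup_nA_n\in U$, the set $\{n:\mu(A_n)=1\}$ is finite and $\mu(\bigcup_nA_n)$ equals the number of such $n$ modulo 2. A binary sequence $(x_n)$ converges to $x_0\in B_2$ if there is $N$ with $x_n=x_0$ for all $n\ge N$; the limit is then $x_0$. *)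

theory Defs
  imports Main
begin

text \<open>The two-element group B_2 = {0,1} with addition mod 2 is modelled by bool:
  0 = False, 1 = True, and x \<oplus> y is (x \<noteq> y).\<close>

definition symdiff :: "'a set \<Rightarrow> 'a set \<Rightarrow> 'a set" where
  "symdiff A B = (A - B) \<union> (B - A)"

definition b2_additive :: "'a set set \<Rightarrow> ('a set \<Rightarrow> bool) \<Rightarrow> bool" where
  "b2_additive U \<mu> \<longleftrightarrow> (\<forall>A\<in>U. \<forall>B\<in>U. \<mu> (symdiff A B) = (\<mu> A \<noteq> \<mu> B))"

text \<open>Countable additivity: for pairwise disjoint sets in U whose union is in U,
  only finitely many have measure 1, and the measure of the union is their number mod 2.\<close>
definition b2_measure :: "'a set set \<Rightarrow> ('a set \<Rightarrow> bool) \<Rightarrow> bool" where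
  "b2_measure U \<mu> \<longleftrightarrow>
     (\<forall>A :: nat \<Rightarrow> 'a set. (\<forall>n. A n \<in> U) \<and> (\<forall>m n. m \<noteq> n \<longrightarrow> A m \<inter> A n = {}) \<and> (\<Union>n. A n) \<in> U \<longrightarrow>
        finite {n. \<mu> (A n)} \<and> \<mu> (\<Union>n. A n) = odd (card {n. \<mu> (A n)}))"

definition b2_converges_to :: "(nat \<Rightarrow> bool) \<Rightarrow> bool \<Rightarrow> bool" where
  "b2_converges_to x x0 \<longleftrightarrow> (\<exists>N. \<forall>n\<ge>N. x n = x0)"

definition b2_convergent :: "(nat \<Rightarrow> bool) \<Rightarrow> bool" where
  "b2_convergent x \<longleftrightarrow> (\<exists>x0. b2_converges_to x x0)"

definition b2_lim :: "(nat \<Rightarrow> bool) \<Rightarrow> bool" where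
  "b2_lim x = (THE x0. b2_converges_to x x0)"

definition b2_asc_continuous :: "'a set set \<Rightarrow> ('a set \<Rightarrow> bool) \<Rightarrow> bool" where
  "b2_asc_continuous U \<mu> \<longleftrightarrow>
     (\<forall>A :: nat \<Rightarrow> 'a set. (\<forall>n. A n \<in> U) \<and> (\<forall>n. A n \<subseteq> A (Suc n)) \<and> (\<Union>n. A n) \<in> U \<longrightarrow>
        b2_convergent (\<lambda>n. \<mu> (A n)) \<and> \<mu> (\<Union>n. A n) = b2_lim (\<lambda>n. \<mu> (A n)))"

end

theory Submission
  imports Defs
begin

lemma conv_lim:
  assumes "b2_converges_to x a"
  shows "b2_convergent x \<and> b2_lim x = a"
proof -
  have u: "b = a" if hb: "b2_converges_to x b" for b
  proof -
    obtain N where N: "\<forall>n\<ge>N. x n = a" using assms unfolding b2_converges_to_def by blast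
    obtain M where M: "\<forall>n\<ge>M. x n = b" using hb unfolding b2_converges_to_def by blast
    have "x (max N M) = a" "x (max N M) = b" using N M by (meson max.cobounded1 max.cobounded2)+
    thus ?thesis by simp
  qed
  have "b2_lim x = a" unfolding b2_lim_def using assms u by (rule the_equality)
  thus ?thesis using assms unfolding b2_convergent_def by blast
qed

lemma card_Suc_split:
  "card {k. k \<le> Suc n \<and> P k} = card {k. k \<le> n \<and> P k} + (if P (Suc n) then 1 else 0)"
proof -
  have e: "{k. k \<le> Suc n \<and> P k} = {k. k \<le> n \<and> P k} \<union> (if P (Suc n) then {Suc n} else {})"
    by (auto simp: le_Suc_eq)
  show ?thesis unfolding e by auto
qed

theorem theorem4p2:
  fixes X :: "'a set" and U :: "'a set set" and \<mu> :: "'a set \<Rightarrow> bool"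
  assumes "U \<subseteq> Pow X" and "U \<noteq> {}"
    and "\<And>A B. A \<in> U \<Longrightarrow> B \<in> U \<Longrightarrow> symdiff A B \<in> U"
    and "\<And>A B. A \<in> U \<Longrightarrow> B \<in> U \<Longrightarrow> A \<inter> B \<in> U"
  shows "(b2_measure U \<mu> \<longrightarrow> b2_asc_continuous U \<mu>)
       \<and> (b2_additive U \<mu> \<and> b2_asc_continuous U \<mu> \<longrightarrow> b2_measure U \<mu>)"
proof (intro conjI impI)
  have emp: "{} \<in> U"
  proof -
    obtain B where "B \<in> U" using assms(2) by blast
    hence "symdiff B B \<in> U" using assms(3) by blast
    thus ?thesis by (simp add: symdiff_def)
  qed
  show "b2_asc_continuous U \<mu>" if meas: "b2_measure U \<mu>"
    unfolding b2_asc_continuous_def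
  proof (intro allI impI)
    fix A :: "nat \<Rightarrow> 'a set"
    assume h: "(\<forall>n. A n \<in> U) \<and> (\<forall>n. A n \<subseteq> A (Suc n)) \<and> (\<Union>n. A n) \<in> U"
    have AU: "\<And>n. A n \<in> U" and inc: "\<And>n. A n \<subseteq> A (Suc n)" and UU: "(\<Union>n. A n) \<in> U"
      using h by auto
    have mono: "A m \<subseteq> A n" if "m \<le> n" for m n
      using lift_Suc_mono_le[of A, OF inc that] .
    have mu0: "\<not> \<mu> {}"
    proof -
      have "finite {n::nat. \<mu> ((\<lambda>_. {}) n)}"
        using meas emp unfolding b2_measure_def
        apply -
        apply (drule spec[of _ "\<lambda>_. {}"])
        by simp
      thus ?thesis by (cases "\<mu> {}") auto
    qed
    define D where "D n = (case n of 0 \<Rightarrow> A 0 | Suc m \<Rightarrow> A (Suc m) - A m)" for n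
    have DU: "D n \<in> U" for n
    proof (cases n)
      case 0 thus ?thesis using AU by (simp add: D_def)
    next
      case (Suc m)
      have "A (Suc m) - A m = symdiff (A (Suc m)) (A m)"
        using inc[of m] by (auto simp: symdiff_def)
      thus ?thesis using Suc AU assms(3) by (simp add: D_def)
    qed
    have DA: "D n \<subseteq> A n" for n by (cases n) (auto simp: D_def)
    have Dun: "(\<Union>k\<in>{..n}. D k) = A n" for n
    proof (induction n)
      case 0 thus ?case by (simp add: D_def)
    next
      case (Suc n)
      have "{..Suc n} = insert (Suc n) {..n}" by auto
      hence "(\<Union>k\<in>{..Suc n}. D k) = D (Suc n) \<union> A n" using Suc by simp
      also have "\<dots> = A (Suc n)" using inc[of n] by (auto simp: D_def)
      finally show ?case .
    qed
    have Ddisj: "D m \<inter> D n = {}" if mn: "m < n" for m n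
    proof -
      obtain k where k: "n = Suc k" using mn by (cases n) auto
      have "D m \<subseteq> A k" using DA[of m] mono[of m k] mn k by auto
      thus ?thesis using k by (auto simp: D_def)
    qed
    have Ddisj2: "\<forall>m n. m \<noteq> n \<longrightarrow> D m \<inter> D n = {}"
      using Ddisj by (metis inf_commute nat_neq_iff)
    have UD: "(\<Union>n. D n) = (\<Union>n. A n)"
    proof
      show "(\<Union>n. D n) \<subseteq> (\<Union>n. A n)" using DA by blast
      show "(\<Union>n. A n) \<subseteq> (\<Union>n. D n)" using Dun by blast
    qed
    have mD: "finite {n. \<mu> (D n)} \<and> \<mu> (\<Union>n. A n) = odd (card {n. \<mu> (D n)})"
      using meas DU Ddisj2 UU UD unfolding b2_measure_def
      apply -
      apply (drule spec[of _ D])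
      by simp
    have mAn: "\<mu> (A n) = odd (card {k. k \<le> n \<and> \<mu> (D k)})" for n
    proof -
      define E where "E k = (if k \<le> n then D k else {})" for k
      have EU: "\<forall>k. E k \<in> U" using DU emp by (simp add: E_def)
      have Ed: "\<forall>m k. m \<noteq> k \<longrightarrow> E m \<inter> E k = {}" using Ddisj2 by (simp add: E_def)
      have UE: "(\<Union>k. E k) = A n"
      proof -
        have "(\<Union>k. E k) = (\<Union>k\<in>{..n}. D k)" by (auto simp: E_def split: if_splits)
        thus ?thesis using Dun by simp
      qed
      have sE: "{k. \<mu> (E k)} = {k. k \<le> n \<and> \<mu> (D k)}" using mu0 by (auto simp: E_def)
      show ?thesis using meas EU Ed UE AU sE unfolding b2_measure_def
        apply -
        apply (drule spec[of _ E])
        by simp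
    qed
    define F where "F = {n. \<mu> (D n)}"
    have fF: "finite F" using mD F_def by simp
    obtain N where N: "\<forall>k\<in>F. k \<le> N" using fF finite_nat_set_iff_bounded_le by blast
    have "b2_converges_to (\<lambda>n. \<mu> (A n)) (\<mu> (\<Union>n. A n))"
      unfolding b2_converges_to_def
    proof (intro exI allI impI)
      fix n assume "N \<le> n"
      hence "{k. k \<le> n \<and> \<mu> (D k)} = F" using N F_def by auto
      thus "\<mu> (A n) = \<mu> (\<Union>n. A n)" using mAn mD F_def by simp
    qed
    from conv_lim[OF this]
    show "b2_convergent (\<lambda>n. \<mu> (A n)) \<and> \<mu> (\<Union>n. A n) = b2_lim (\<lambda>n. \<mu> (A n))" by simp
  qed
  show "b2_measure U \<mu>" if hb: "b2_additive U \<mu> \<and> b2_asc_continuous U \<mu>"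
    unfolding b2_measure_def
  proof (intro allI impI)
    have add: "\<And>A B. A \<in> U \<Longrightarrow> B \<in> U \<Longrightarrow> \<mu> (symdiff A B) = (\<mu> A \<noteq> \<mu> B)"
      using hb unfolding b2_additive_def by blast
    have cont: "b2_asc_continuous U \<mu>" using hb by blast
    fix A :: "nat \<Rightarrow> 'a set"
    assume h: "(\<forall>n. A n \<in> U) \<and> (\<forall>m n. m \<noteq> n \<longrightarrow> A m \<inter> A n = {}) \<and> (\<Union>n. A n) \<in> U"
    have AU: "\<And>n. A n \<in> U" and dis: "\<And>m n. m \<noteq> n \<Longrightarrow> A m \<inter> A n = {}"
      and UU: "(\<Union>n. A n) \<in> U" using h by auto
    define S where "S n = (\<Union>k\<in>{..n}. A k)" for n
    have S0: "S 0 = A 0" by (simp add: S_def)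
    have SS: "S (Suc n) = symdiff (S n) (A (Suc n))" for n
    proof -
      have "{..Suc n} = insert (Suc n) {..n}" by auto
      hence e: "S (Suc n) = A (Suc n) \<union> S n" by (simp add: S_def)
      have "S n \<inter> A (Suc n) = {}"
      proof -
        have "A k \<inter> A (Suc n) = {}" if "k \<le> n" for k using dis[of k "Suc n"] that by simp
        thus ?thesis by (auto simp: S_def)
      qed
      thus ?thesis using e by (auto simp: symdiff_def)
    qed
    have SU: "S n \<in> U" for n
      by (induction n) (simp_all add: S0 SS AU assms(3))
    have mS: "\<mu> (S n) = odd (card {k. k \<le> n \<and> \<mu> (A k)})" for n
    proof (induction n)
      case 0
      have "{k. k \<le> (0::nat) \<and> \<mu> (A k)} = (if \<mu> (A 0) then {0} else {})" by auto
      thus ?case by (simp add: S0)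
    next
      case (Suc n)
      show ?case using Suc SS add[OF SU AU] card_Suc_split[of n "\<lambda>k. \<mu> (A k)"] by auto
    qed
    have Sinc: "\<forall>n. S n \<subseteq> S (Suc n)" unfolding S_def
      by (intro allI UN_mono) auto
    have US: "(\<Union>n. S n) = (\<Union>n. A n)" by (auto simp: S_def)
    have c: "b2_convergent (\<lambda>n. \<mu> (S n)) \<and> \<mu> (\<Union>n. S n) = b2_lim (\<lambda>n. \<mu> (S n))"
      using cont SU Sinc US UU unfolding b2_asc_continuous_def
      apply -
      apply (drule spec[of _ S])
      by simp
    then obtain L where L: "b2_converges_to (\<lambda>n. \<mu> (S n)) L" unfolding b2_convergent_def by blast
    then obtain N where N: "\<forall>n\<ge>N. \<mu> (S n) = L" unfolding b2_converges_to_def by blast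
    have lim: "\<mu> (\<Union>n. A n) = L" using c conv_lim[OF L] US by simp
    have bnd: "{n. \<mu> (A n)} \<subseteq> {..N}"
    proof
      fix n assume n: "n \<in> {n. \<mu> (A n)}"
      show "n \<in> {..N}"
      proof (rule ccontr)
        assume "n \<notin> {..N}"
        then obtain m where m: "n = Suc m" "N \<le> m" by (cases n) auto
        have "\<mu> (S (Suc m)) = \<mu> (S m)" using N m by simp
        thus False using add[OF SU AU, of m "Suc m"] SS[of m] n m by auto
      qed
    qed
    have fin: "finite {n. \<mu> (A n)}" using bnd finite_subset by blast
    have "{k. k \<le> N \<and> \<mu> (A k)} = {n. \<mu> (A n)}" using bnd by auto
    hence "\<mu> (S N) = odd (card {n. \<mu> (A n)})" using mS by simp
    thus "finite {n. \<mu> (A n)} \<and> \<mu> (\<Union>n. A n) = odd (card {n. \<mu> (A n)})"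
      using fin lim N by simp
  qed
qed

end
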